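(* Let $C$ be an ordered field and let $\mathbb{M}$ be a model of $T_{\mathrm{Ham}}$ with underlying set $G_\infty$. Then there are (1) a definable subset $H\subseteq G$ which is $C$-linearly independent and dense in $(G,<_0)$, and (2) a definable subset $S\subsetneq G$ which is the underlying set of an elementary substructure of the ordered $C$-vector space $(G;+,<_0,(\lambda_c)_{c\in C})$.
   Context: Let $C$ be an ordered field. A Hamel space over $C$ is a $C$-vector space $G$ with two total orderings $<_0,<_1$, each making $G$ an ordered $C$-vector space, and a map $v:G\to G_\infty=G\cup\{\infty\}$ ($G<_0\infty$, $G<_1\infty$) such that for all $x,y\in G$, $\lambda\in C^{\times}$: $v(x)=\infty$ iff $x=0$; $v(x+y)\ge_0\min_0(v(x),v(y))$; $v(\lambda x)=v(x)$; $0<_1x<_1y\Rightarrow v(x)\ge_0v(y)$; $v(v(x))=v(x)$ (with $v(\infty)=\infty$); $v(x)>_10$. It is independent if for all $a_0<_0b_0$, $a_1<_1b_1$ in $G\cup\{\pm\infty\}$ some $z\in G$ has $a_0<_0z<_0b_0$, $a_1<_1z<_1b_1$; dense if for all $a<_0b$ in $G$ some $c$ has $a<_0v(c)<_0b$. $T_{\mathrm{Ham}}$ is the theory in the language $\{0,+,(\lambda_c)_{c\in C},<_0,<_1,v,\infty\}$ on universe $G_\infty$ (with $\infty$ absorbing for $+$, $\lambda_c$, $v$) whose models are exactly the independent dense Hamel spaces over $C$; "definable" refers to this language. $\lambda_c$ denotes scalar multiplication by $c$. *)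

theory Defs
  imports Complex_Main
begin

(* G is modelled by a type 'g, G_infinity by 'g option (None = infinity).
   C is a type 'c :: linordered_field. Addition of G is the (+) of 'g. *)

definition ordered_vs :: "('g::ab_group_add \<Rightarrow> 'g \<Rightarrow> bool) \<Rightarrow> ('c::linordered_field \<Rightarrow> 'g \<Rightarrow> 'g) \<Rightarrow> bool" where
  "ordered_vs lt smul \<longleftrightarrow>
     (\<forall>x. \<not> lt x x) \<and> (\<forall>x y z. lt x y \<longrightarrow> lt y z \<longrightarrow> lt x z) \<and>
     (\<forall>x y. x \<noteq> y \<longrightarrow> lt x y \<or> lt y x) \<and>
     (\<forall>x y z. lt x y \<longrightarrow> lt (x + z) (y + z)) \<and>
     (\<forall>c x y. 0 < c \<longrightarrow> lt x y \<longrightarrow> lt (smul c x) (smul c y))"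

fun olt :: "('g \<Rightarrow> 'g \<Rightarrow> bool) \<Rightarrow> 'g option \<Rightarrow> 'g option \<Rightarrow> bool" where
  "olt lt (Some a) (Some b) = lt a b"
| "olt lt (Some a) None = True"
| "olt lt None _ = False"

definition ole :: "('g \<Rightarrow> 'g \<Rightarrow> bool) \<Rightarrow> 'g option \<Rightarrow> 'g option \<Rightarrow> bool" where
  "ole lt a b \<longleftrightarrow> olt lt a b \<or> a = b"

definition omin :: "('g \<Rightarrow> 'g \<Rightarrow> bool) \<Rightarrow> 'g option \<Rightarrow> 'g option \<Rightarrow> 'g option" where
  "omin lt a b = (if ole lt a b then a else b)"

definition hamel_space ::
  "('g::ab_group_add \<Rightarrow> 'g \<Rightarrow> bool) \<Rightarrow> ('g \<Rightarrow> 'g \<Rightarrow> bool) \<Rightarrow>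
   ('c::linordered_field \<Rightarrow> 'g \<Rightarrow> 'g) \<Rightarrow> ('g \<Rightarrow> 'g option) \<Rightarrow> bool" where
  "hamel_space lt0 lt1 smul v \<longleftrightarrow>
     vector_space smul \<and> ordered_vs lt0 smul \<and> ordered_vs lt1 smul \<and>
     (\<forall>x. v x = None \<longleftrightarrow> x = 0) \<and>
     (\<forall>x y. ole lt0 (omin lt0 (v x) (v y)) (v (x + y))) \<and>
     (\<forall>c x. c \<noteq> 0 \<longrightarrow> v (smul c x) = v x) \<and>
     (\<forall>x y. lt1 0 x \<longrightarrow> lt1 x y \<longrightarrow> ole lt0 (v y) (v x)) \<and>
     (\<forall>x g. v x = Some g \<longrightarrow> v g = Some g) \<and>
     (\<forall>x. olt lt1 (Some 0) (v x))"

(* lower bound: None = -infinity; upper bound: None = +infinity *)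
definition above_lb :: "('g \<Rightarrow> 'g \<Rightarrow> bool) \<Rightarrow> 'g option \<Rightarrow> 'g \<Rightarrow> bool" where
  "above_lb lt a z = (case a of None \<Rightarrow> True | Some a' \<Rightarrow> lt a' z)"

definition below_ub :: "('g \<Rightarrow> 'g \<Rightarrow> bool) \<Rightarrow> 'g \<Rightarrow> 'g option \<Rightarrow> bool" where
  "below_ub lt z b = (case b of None \<Rightarrow> True | Some b' \<Rightarrow> lt z b')"

definition ext_lt :: "('g \<Rightarrow> 'g \<Rightarrow> bool) \<Rightarrow> 'g option \<Rightarrow> 'g option \<Rightarrow> bool" where
  "ext_lt lt a b = (case (a, b) of (Some a', Some b') \<Rightarrow> lt a' b' | _ \<Rightarrow> True)"

definition independent_hamel :: "('g \<Rightarrow> 'g \<Rightarrow> bool) \<Rightarrow> ('g \<Rightarrow> 'g \<Rightarrow> bool) \<Rightarrow> bool" where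
  "independent_hamel lt0 lt1 \<longleftrightarrow>
     (\<forall>a0 b0 a1 b1. ext_lt lt0 a0 b0 \<longrightarrow> ext_lt lt1 a1 b1 \<longrightarrow>
        (\<exists>z. above_lb lt0 a0 z \<and> below_ub lt0 z b0 \<and> above_lb lt1 a1 z \<and> below_ub lt1 z b1))"

definition dense_hamel :: "('g \<Rightarrow> 'g \<Rightarrow> bool) \<Rightarrow> ('g \<Rightarrow> 'g option) \<Rightarrow> bool" where
  "dense_hamel lt0 v \<longleftrightarrow>
     (\<forall>a b. lt0 a b \<longrightarrow> (\<exists>c. olt lt0 (Some a) (v c) \<and> olt lt0 (v c) (Some b)))"

definition model_T_Ham ::
  "('g::ab_group_add \<Rightarrow> 'g \<Rightarrow> bool) \<Rightarrow> ('g \<Rightarrow> 'g \<Rightarrow> bool) \<Rightarrow>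
   ('c::linordered_field \<Rightarrow> 'g \<Rightarrow> 'g) \<Rightarrow> ('g \<Rightarrow> 'g option) \<Rightarrow> bool" where
  "model_T_Ham lt0 lt1 smul v \<longleftrightarrow>
     hamel_space lt0 lt1 smul v \<and> independent_hamel lt0 lt1 \<and> dense_hamel lt0 v"

datatype 'c hterm = HVar nat | HZero | HInf | HPlus "'c hterm" "'c hterm"
  | HScal 'c "'c hterm" | HVal "'c hterm"

datatype 'c hform = HEq "'c hterm" "'c hterm" | HLess0 "'c hterm" "'c hterm"
  | HLess1 "'c hterm" "'c hterm" | HNot "'c hform" | HAnd "'c hform" "'c hform"
  | HEx nat "'c hform"

fun heval :: "('c \<Rightarrow> 'g::ab_group_add \<Rightarrow> 'g) \<Rightarrow> ('g \<Rightarrow> 'g option) \<Rightarrow>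
    (nat \<Rightarrow> 'g option) \<Rightarrow> 'c hterm \<Rightarrow> 'g option" where
  "heval smul v e (HVar n) = e n"
| "heval smul v e HZero = Some 0"
| "heval smul v e HInf = None"
| "heval smul v e (HPlus s t) =
     (case (heval smul v e s, heval smul v e t) of (Some x, Some y) \<Rightarrow> Some (x + y) | _ \<Rightarrow> None)"
| "heval smul v e (HScal c t) = map_option (smul c) (heval smul v e t)"
| "heval smul v e (HVal t) = (case heval smul v e t of None \<Rightarrow> None | Some x \<Rightarrow> v x)"

fun hsat :: "('g::ab_group_add \<Rightarrow> 'g \<Rightarrow> bool) \<Rightarrow> ('g \<Rightarrow> 'g \<Rightarrow> bool) \<Rightarrow>
    ('c \<Rightarrow> 'g \<Rightarrow> 'g) \<Rightarrow> ('g \<Rightarrow> 'g option) \<Rightarrow> 'c hform \<Rightarrow> (nat \<Rightarrow> 'g option) \<Rightarrow> bool" where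
  "hsat lt0 lt1 smul v (HEq s t) e = (heval smul v e s = heval smul v e t)"
| "hsat lt0 lt1 smul v (HLess0 s t) e = olt lt0 (heval smul v e s) (heval smul v e t)"
| "hsat lt0 lt1 smul v (HLess1 s t) e = olt lt1 (heval smul v e s) (heval smul v e t)"
| "hsat lt0 lt1 smul v (HNot f) e = (\<not> hsat lt0 lt1 smul v f e)"
| "hsat lt0 lt1 smul v (HAnd f g) e = (hsat lt0 lt1 smul v f e \<and> hsat lt0 lt1 smul v g e)"
| "hsat lt0 lt1 smul v (HEx n f) e = (\<exists>a. hsat lt0 lt1 smul v f (e(n := a)))"

(* definable (with parameters): defined by a formula with distinguished free variable 0,
   the other variables being interpreted by parameters from G_infinity *)
definition hdefinable :: "('g::ab_group_add \<Rightarrow> 'g \<Rightarrow> bool) \<Rightarrow> ('g \<Rightarrow> 'g \<Rightarrow> bool) \<Rightarrow>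
    ('c \<Rightarrow> 'g \<Rightarrow> 'g) \<Rightarrow> ('g \<Rightarrow> 'g option) \<Rightarrow> 'g option set \<Rightarrow> bool" where
  "hdefinable lt0 lt1 smul v D \<longleftrightarrow>
     (\<exists>(f :: 'c hform) e. D = {a. hsat lt0 lt1 smul v f (e(0 := a))})"

datatype 'c oterm = OVar nat | OPlus "'c oterm" "'c oterm" | OScal 'c "'c oterm"

datatype 'c oform = OEq "'c oterm" "'c oterm" | OLess "'c oterm" "'c oterm"
  | ONot "'c oform" | OAnd "'c oform" "'c oform" | OEx nat "'c oform"

fun oeval :: "('c \<Rightarrow> 'g::ab_group_add \<Rightarrow> 'g) \<Rightarrow> (nat \<Rightarrow> 'g) \<Rightarrow> 'c oterm \<Rightarrow> 'g" where
  "oeval smul e (OVar n) = e n"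
| "oeval smul e (OPlus s t) = oeval smul e s + oeval smul e t"
| "oeval smul e (OScal c t) = smul c (oeval smul e t)"

(* satisfaction in the substructure with universe S (quantifiers range over S) *)
fun osat :: "('g::ab_group_add \<Rightarrow> 'g \<Rightarrow> bool) \<Rightarrow> ('c \<Rightarrow> 'g \<Rightarrow> 'g) \<Rightarrow> 'g set \<Rightarrow>
    'c oform \<Rightarrow> (nat \<Rightarrow> 'g) \<Rightarrow> bool" where
  "osat lt smul S (OEq s t) e = (oeval smul e s = oeval smul e t)"
| "osat lt smul S (OLess s t) e = lt (oeval smul e s) (oeval smul e t)"
| "osat lt smul S (ONot f) e = (\<not> osat lt smul S f e)"
| "osat lt smul S (OAnd f g) e = (osat lt smul S f e \<and> osat lt smul S g e)"
| "osat lt smul S (OEx n f) e = (\<exists>a\<in>S. osat lt smul S f (e(n := a)))"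

definition elementary_substructure :: "('g::ab_group_add \<Rightarrow> 'g \<Rightarrow> bool) \<Rightarrow>
    ('c \<Rightarrow> 'g \<Rightarrow> 'g) \<Rightarrow> 'g set \<Rightarrow> bool" where
  "elementary_substructure lt smul S \<longleftrightarrow>
     S \<noteq> {} \<and> (\<forall>x\<in>S. \<forall>y\<in>S. x + y \<in> S) \<and> (\<forall>c. \<forall>x\<in>S. smul c x \<in> S) \<and>
     (\<forall>(f :: 'c oform) e. (\<forall>n. e n \<in> S) \<longrightarrow> (osat lt smul S f e \<longleftrightarrow> osat lt smul UNIV f e))"

definition dense_in :: "('g \<Rightarrow> 'g \<Rightarrow> bool) \<Rightarrow> 'g set \<Rightarrow> bool" where
  "dense_in lt H \<longleftrightarrow> (\<forall>a b. lt a b \<longrightarrow> (\<exists>h\<in>H. lt a h \<and> lt h b))"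

end

theory Submission
  imports Defs
begin

definition coef :: "nat \<Rightarrow> (nat \<times> 'c::linordered_field) list \<Rightarrow> 'c" where
  "coef m l = sum_list (map snd (filter (\<lambda>(i,c). i = m) l))"
definition rest :: "nat \<Rightarrow> (nat \<times> 'c::linordered_field) list \<Rightarrow> (nat \<times> 'c) list" where
  "rest m l = filter (\<lambda>(i,c). i \<noteq> m) l"
definition scl :: "'c::linordered_field \<Rightarrow> (nat \<times> 'c) list \<Rightarrow> (nat \<times> 'c) list" where
  "scl k l = map (\<lambda>(i,c). (i, k * c)) l"
definition pt :: "nat \<Rightarrow> (nat \<times> 'c::linordered_field) list \<Rightarrow> (nat \<times> 'c) list" where
  "pt m t = scl (- (1 / coef m t)) (rest m t)"
fun lin :: "'c::linordered_field oterm \<Rightarrow> (nat \<times> 'c) list" where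
  "lin (OVar n) = [(n, 1)]"
| "lin (OPlus s t) = lin s @ lin t"
| "lin (OScal c t) = scl c (lin t)"

locale ovs =
  fixes lt :: "'g::ab_group_add \<Rightarrow> 'g \<Rightarrow> bool"
    and smul :: "'c::linordered_field \<Rightarrow> 'g \<Rightarrow> 'g"
  assumes vs: "vector_space smul" and ovs: "ordered_vs lt smul"
begin

sublocale V: vector_space smul by (rule vs)

lemma irr: "\<not> lt x x" using ovs unfolding ordered_vs_def by blast
lemma trans: "lt x y \<Longrightarrow> lt y z \<Longrightarrow> lt x z" using ovs unfolding ordered_vs_def by blast
lemma lin: "x \<noteq> y \<Longrightarrow> lt x y \<or> lt y x" using ovs unfolding ordered_vs_def by blast
lemma addm: "lt x y \<Longrightarrow> lt (x + z) (y + z)" using ovs unfolding ordered_vs_def by blast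
lemma sm: "0 < c \<Longrightarrow> lt x y \<Longrightarrow> lt (smul c x) (smul c y)" using ovs unfolding ordered_vs_def by blast
lemma asym: "lt x y \<Longrightarrow> \<not> lt y x" using irr trans by blast

lemma add_iff: "lt (x + z) (y + z) \<longleftrightarrow> lt x y"
proof
  assume "lt (x + z) (y + z)"
  from addm[OF this, of "-z"] show "lt x y" by simp
qed (rule addm)

lemma lt_diff: "lt 0 (x - y) \<longleftrightarrow> lt y x"
  using add_iff[of 0 y "x - y"] by (simp add: algebra_simps)

lemma lt_neg: "lt 0 (- x) \<longleftrightarrow> lt x 0"
  using lt_diff[of 0 x] by simp

lemma pos_smul: assumes "0 < c" shows "lt 0 (smul c x) \<longleftrightarrow> lt 0 x"
proof
  assume h: "lt 0 (smul c x)"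
  show "lt 0 x"
  proof (rule ccontr)
    assume "\<not> lt 0 x"
    then have "x = 0 \<or> lt x 0" using lin by blast
    then show False
    proof
      assume "x = 0" then show False using h irr by simp
    next
      assume "lt x 0" from sm[OF assms this] h asym show False by simp
    qed
  qed
next
  assume "lt 0 x" from sm[OF assms this] show "lt 0 (smul c x)" by simp
qed

definition sa :: "'g \<Rightarrow> 'g \<Rightarrow> bool" where
  "sa x y \<longleftrightarrow> (x = 0 \<longleftrightarrow> y = 0) \<and> (lt 0 x \<longleftrightarrow> lt 0 y)"

lemma sa_refl: "sa x x" by (simp add: sa_def)
lemma sa_sym: "sa x y \<Longrightarrow> sa y x" by (auto simp add: sa_def)

lemma neg_char: "lt x 0 \<longleftrightarrow> x \<noteq> 0 \<and> \<not> lt 0 x"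
proof
  assume "lt x 0" then show "x \<noteq> 0 \<and> \<not> lt 0 x" using irr asym by blast
next
  assume "x \<noteq> 0 \<and> \<not> lt 0 x" then show "lt x 0" using lin by blast
qed

lemma sa_neg: "sa x y \<Longrightarrow> sa (- x) (- y)"
  unfolding sa_def lt_neg neg_char by simp

lemma sa_smul: assumes c0: "c \<noteq> 0" and xy: "sa x y" shows "sa (smul c x) (smul c y)"
proof (cases "0 < c")
  case True
  then show ?thesis using assms pos_smul[OF True] by (simp add: sa_def)
next
  case False
  then have c: "0 < - c" using c0 by simp
  have e: "smul c z = smul (-c) (-z)" for z by simp
  have z: "smul (-c) z = 0 \<longleftrightarrow> z = 0" for z using c by simp
  have s: "sa (-x) (-y)" using sa_neg[OF xy] .
  have "sa (smul (-c) (-x)) (smul (-c) (-y))"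
    using s unfolding sa_def z pos_smul[OF c] .
  then show ?thesis using e by metis
qed

lemma sa_diff: "sa (x - y) (x' - y') \<longleftrightarrow> ((x = y \<longleftrightarrow> x' = y') \<and> (lt y x \<longleftrightarrow> lt y' x'))"
  by (simp add: sa_def lt_diff)

lemma max_ex:
  fixes R :: "'x \<Rightarrow> 'x \<Rightarrow> bool"
  assumes "finite A" "A \<noteq> {}" "\<And>x. \<not> R x x" "\<And>x y z. R x y \<Longrightarrow> R y z \<Longrightarrow> R x z"
  shows "\<exists>i\<in>A. \<forall>k\<in>A. \<not> R (f i) (f k)"
  using assms(1,2)
proof (induction A rule: finite_ne_induct)
  case (singleton x) then show ?case using assms(3) by auto
next
  case (insert x F)
  then obtain i where i: "i \<in> F" "\<forall>k\<in>F. \<not> R (f i) (f k)" by blast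
  show ?case
  proof (cases "R (f i) (f x)")
    case True
    then show ?thesis using i assms(3,4) by blast
  next
    case False
    then show ?thesis using i by blast
  qed
qed

lemma mid: assumes "lt x y" shows "lt x (smul (1/2) (x + y))" "lt (smul (1/2) (x + y)) y"
proof -
  have h: "smul (1/2) (z + z) = z" for z
    by (simp add: V.scale_right_distrib flip: V.scale_left_distrib)
  have "lt (x + x) (x + y)" using addm[OF assms, of x] by (simp add: add.commute)
  from sm[OF _ this, of "1/2"] h show "lt x (smul (1/2) (x + y))" by simp
  have "lt (x + y) (y + y)" using addm[OF assms, of y] by simp
  from sm[OF _ this, of "1/2"] h show "lt (smul (1/2) (x + y)) y" by simp
qed


lemma realize:
  assumes fin: "finite I"
  and PP: "\<forall>i\<in>I. \<forall>j\<in>I. (P i = P j \<longleftrightarrow> P' i = P' j) \<and> (lt (P i) (P j) \<longleftrightarrow> lt (P' i) (P' j))"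
  and inS: "\<forall>i\<in>I. P' i \<in> S"
  and addS: "\<forall>x\<in>S. \<forall>y\<in>S. x + y \<in> S" and smS: "\<forall>c. \<forall>x\<in>S. smul c x \<in> S"
  and sS: "s \<in> S" and spos: "lt 0 s"
  shows "\<exists>b'\<in>S. \<forall>i\<in>I. (b = P i \<longleftrightarrow> b' = P' i) \<and> (lt (P i) b \<longleftrightarrow> lt (P' i) b')"
proof (cases "\<exists>i\<in>I. b = P i")
  case True
  then obtain i where i: "i \<in> I" "b = P i" by blast
  have "\<forall>j\<in>I. (b = P j \<longleftrightarrow> P' i = P' j) \<and> (lt (P j) b \<longleftrightarrow> lt (P' j) (P' i))"
  proof
    fix j assume j: "j \<in> I"
    show "(b = P j \<longleftrightarrow> P' i = P' j) \<and> (lt (P j) b \<longleftrightarrow> lt (P' j) (P' i))"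
      using PP[rule_format, OF i(1) j] PP[rule_format, OF j i(1)] i(2) by simp
  qed
  then show ?thesis using inS i(1) by blast
next
  case False
  define L where "L = {i\<in>I. lt (P i) b}"
  define U where "U = {i\<in>I. lt b (P i)}"
  have LU: "i \<in> L \<or> i \<in> U" if "i \<in> I" for i
  proof -
    have "b \<noteq> P i" using False that by blast
    then have "lt (P i) b \<or> lt b (P i)" using lin by blast
    then show ?thesis unfolding L_def U_def using that by blast
  qed
  have LI: "L \<subseteq> I" and UI: "U \<subseteq> I" unfolding L_def U_def by auto
  have finL: "finite L" "finite U" using fin LI UI finite_subset by auto
  have le_of: "lt (P' k) (P' i) \<or> P' k = P' i" if "k \<in> I" "i \<in> I" "\<not> lt (P i) (P k)" for i k
  proof (cases "P i = P k")
    case True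
    then show ?thesis using PP[rule_format, OF that(1,2)] by simp
  next
    case False
    then have "lt (P k) (P i)" using lin that(3) by blast
    then show ?thesis using PP[rule_format, OF that(1,2)] by simp
  qed
  have key: "\<exists>b'\<in>S. (\<forall>k\<in>L. lt (P' k) b') \<and> (\<forall>k\<in>U. lt b' (P' k))"
  proof -
    have maxL: "\<exists>i0\<in>L. \<forall>k\<in>L. lt (P' k) (P' i0) \<or> P' k = P' i0" if ne: "L \<noteq> {}"
    proof -
      have "\<exists>i\<in>L. \<forall>k\<in>L. \<not> lt (P i) (P k)"
        by (rule max_ex[OF finL(1) ne]) (use irr trans in blast)+
      then obtain i0 where i0: "i0 \<in> L" "\<forall>k\<in>L. \<not> lt (P i0) (P k)" by blast
      have "lt (P' k) (P' i0) \<or> P' k = P' i0" if "k \<in> L" for k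
        using le_of[of k i0] i0 that LI by blast
      then show ?thesis using i0(1) by blast
    qed
    have minU: "\<exists>j0\<in>U. \<forall>k\<in>U. lt (P' j0) (P' k) \<or> P' k = P' j0" if ne: "U \<noteq> {}"
    proof -
      have "\<exists>i\<in>U. \<forall>k\<in>U. \<not> lt (P k) (P i)"
        by (rule max_ex[OF finL(2) ne, where R="\<lambda>x y. lt y x"]) (use irr trans in blast)+
      then obtain j0 where j0: "j0 \<in> U" "\<forall>k\<in>U. \<not> lt (P k) (P j0)" by blast
      have "lt (P' j0) (P' k) \<or> P' k = P' j0" if kU: "k \<in> U" for k
      proof -
        have kI: "j0 \<in> I" "k \<in> I" using kU j0(1) UI by auto
        have "\<not> lt (P k) (P j0)" using j0(2) kU by blast
        from le_of[OF kI this] show ?thesis by auto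
      qed
      then show ?thesis using j0(1) by blast
    qed
    show ?thesis
    proof (cases "L = {}")
      case Le: True
      show ?thesis
      proof (cases "U = {}")
        case True
        show ?thesis using Le True sS by blast
      next
        case False
        then obtain j0 where j0: "j0 \<in> U" "\<forall>k\<in>U. lt (P' j0) (P' k) \<or> P' k = P' j0"
          using minU by blast
        have "lt (0 + (P' j0 - s)) (s + (P' j0 - s))" using addm[OF spos] .
        then have l: "lt (P' j0 - s) (P' j0)" by simp
        have j0S: "P' j0 \<in> S" using inS j0(1) UI by blast
        have "smul (-1) s \<in> S" using smS sS by blast
        then have "P' j0 + smul (-1) s \<in> S" using addS j0S by blast
        then have inn: "P' j0 - s \<in> S" by simp
        have "\<forall>k\<in>U. lt (P' j0 - s) (P' k)"
        proof
          fix k assume "k \<in> U"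
          then have "lt (P' j0) (P' k) \<or> P' k = P' j0" using j0(2) by blast
          then show "lt (P' j0 - s) (P' k)" using l trans by metis
        qed
        then show ?thesis using Le inn by blast
      qed
    next
      case Lne: False
      then obtain i0 where i0: "i0 \<in> L" "\<forall>k\<in>L. lt (P' k) (P' i0) \<or> P' k = P' i0"
        using maxL by blast
      have i0S: "P' i0 \<in> S" using inS i0(1) LI by blast
      show ?thesis
      proof (cases "U = {}")
        case True
        have "lt (0 + P' i0) (s + P' i0)" using addm[OF spos] .
        then have l: "lt (P' i0) (P' i0 + s)" by (simp add: add.commute)
        have inn: "P' i0 + s \<in> S" using addS i0S sS by blast
        have "\<forall>k\<in>L. lt (P' k) (P' i0 + s)"
        proof
          fix k assume "k \<in> L"
          then have "lt (P' k) (P' i0) \<or> P' k = P' i0" using i0(2) by blast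
          then show "lt (P' k) (P' i0 + s)" using l trans by metis
        qed
        then show ?thesis using True inn by blast
      next
        case False
        then obtain j0 where j0: "j0 \<in> U" "\<forall>k\<in>U. lt (P' j0) (P' k) \<or> P' k = P' j0"
          using minU by blast
        have j0S: "P' j0 \<in> S" using inS j0(1) UI by blast
        have "lt (P i0) b" "lt b (P j0)" using i0(1) j0(1) unfolding L_def U_def by auto
        then have "lt (P i0) (P j0)" using trans by blast
        moreover have "i0 \<in> I" "j0 \<in> I" using i0(1) j0(1) LI UI by auto
        ultimately have ij: "lt (P' i0) (P' j0)" using PP by blast
        define m where "m = smul (1/2) (P' i0 + P' j0)"
        have m: "lt (P' i0) m" "lt m (P' j0)" using mid[OF ij] unfolding m_def by auto
        have "P' i0 + P' j0 \<in> S" using addS i0S j0S by blast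
        then have mS: "m \<in> S" unfolding m_def using smS by blast
        have "\<forall>k\<in>L. lt (P' k) m"
        proof
          fix k assume "k \<in> L"
          then have "lt (P' k) (P' i0) \<or> P' k = P' i0" using i0(2) by blast
          then show "lt (P' k) m" using m trans by metis
        qed
        moreover have "\<forall>k\<in>U. lt m (P' k)"
        proof
          fix k assume "k \<in> U"
          then have "lt (P' j0) (P' k) \<or> P' k = P' j0" using j0(2) by blast
          then show "lt m (P' k)" using m trans by metis
        qed
        ultimately show ?thesis using mS by blast
      qed
    qed
  qed
  then obtain b' where b': "b' \<in> S" "\<forall>k\<in>L. lt (P' k) b'" "\<forall>k\<in>U. lt b' (P' k)" by blast
  show ?thesis
  proof (intro bexI[OF _ b'(1)] ballI)
    fix i assume i: "i \<in> I"
    have bi: "b \<noteq> P i" using False i by blast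
    show "(b = P i \<longleftrightarrow> b' = P' i) \<and> (lt (P i) b \<longleftrightarrow> lt (P' i) b')"
    proof (cases "i \<in> L")
      case True
      then have 1: "lt (P' i) b'" "lt (P i) b" using b'(2) unfolding L_def by auto
      then have "b' \<noteq> P' i" using irr by metis
      then show ?thesis using 1 bi by simp
    next
      case nL: False
      then have iU: "i \<in> U" using LU i by blast
      then have 1: "lt b' (P' i)" "lt b (P i)" using b'(3) unfolding U_def by auto
      then have "b' \<noteq> P' i" "\<not> lt (P' i) b'" "\<not> lt (P i) b" using irr asym by metis+
      then show ?thesis using bi by simp
    qed
  qed
qed

definition lev :: "(nat \<Rightarrow> 'g) \<Rightarrow> (nat \<times> 'c) list \<Rightarrow> 'g" where
  "lev e l = sum_list (map (\<lambda>(i,c). smul c (e i)) l)"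

lemma lev_nil[simp]: "lev e [] = 0" by (simp add: lev_def)
lemma lev_cons[simp]: "lev e ((i,c) # l) = smul c (e i) + lev e l" by (simp add: lev_def)
lemma lev_append[simp]: "lev e (l1 @ l2) = lev e l1 + lev e l2" by (simp add: lev_def)
lemma lev_scl[simp]: "lev e (scl k l) = smul k (lev e l)"
  by (induction l) (auto simp: scl_def V.scale_right_distrib)
lemma lev_upd: "lev (e(m:=b)) l = smul (coef m l) b + lev e (rest m l)"
  by (induction l) (auto simp: coef_def rest_def V.scale_left_distrib algebra_simps)
lemma lev_rest_upd[simp]: "lev (e(m:=b)) (rest m l) = lev e (rest m l)"
  by (induction l) (auto simp: rest_def)
lemma lev_lin[simp]: "lev e (lin t) = oeval smul e t"
  by (induction t) auto
lemma lev_inS: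
  assumes "\<forall>n. e n \<in> S" "\<forall>x\<in>S. \<forall>y\<in>S. x + y \<in> S" "\<forall>c. \<forall>x\<in>S. smul c x \<in> S" "0 \<in> S"
  shows "lev e l \<in> S"
  using assms by (induction l) auto

lemma shift:
  assumes "\<forall>t\<in>set T. sa (lev e (rest m t)) (lev e' (rest m t))"
    and "\<forall>t\<in>set T. coef m t \<noteq> 0 \<longrightarrow> sa (b - lev e (pt m t)) (b' - lev e' (pt m t))"
  shows "\<forall>t\<in>set T. sa (lev (e(m:=b)) t) (lev (e'(m:=b')) t)"
proof
  fix t assume t: "t \<in> set T"
  show "sa (lev (e(m:=b)) t) (lev (e'(m:=b')) t)"
  proof (cases "coef m t = 0")
    case True
    then show ?thesis using assms(1) t by (simp add: lev_upd)
  next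
    case False
    have eq: "lev (f(m:=x)) t = smul (coef m t) (x - lev f (pt m t))" for f x
      using False by (simp add: lev_upd pt_def V.scale_right_diff_distrib V.scale_right_distrib)
    show ?thesis unfolding eq using sa_smul[OF False] assms(2) t False by blast
  qed
qed

end

locale ovs_nt = ovs +
  fixes s0 assumes s0: "lt 0 s0"
begin

lemma uniform:
  "\<exists>T. \<forall>e e'. (\<forall>t\<in>set T. sa (lev e t) (lev e' t)) \<longrightarrow>
       (osat lt smul UNIV f e \<longleftrightarrow> osat lt smul UNIV f e')"
proof (induction f)
  case (OEq x y)
  define d where "d = lin y @ scl (-1) (lin x)"
  have v: "lev e d = oeval smul e y - oeval smul e x" for e by (simp add: d_def)
  show ?case
    by (rule exI[of _ "[d]"]) (auto simp: v sa_def)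
next
  case (OLess x y)
  define d where "d = lin y @ scl (-1) (lin x)"
  have v: "lev e d = oeval smul e y - oeval smul e x" for e by (simp add: d_def)
  show ?case
    by (rule exI[of _ "[d]"]) (auto simp: v sa_def lt_diff)
next
  case (ONot f)
  then show ?case by auto
next
  case (OAnd f1 f2)
  then obtain T1 T2 where T1:
    "\<forall>e e'. (\<forall>t\<in>set T1. sa (lev e t) (lev e' t)) \<longrightarrow> (osat lt smul UNIV f1 e \<longleftrightarrow> osat lt smul UNIV f1 e')"
    and T2: "\<forall>e e'. (\<forall>t\<in>set T2. sa (lev e t) (lev e' t)) \<longrightarrow> (osat lt smul UNIV f2 e \<longleftrightarrow> osat lt smul UNIV f2 e')"
    by blast
  show ?case
  proof (intro exI[of _ "T1 @ T2"] allI impI)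
    fix e e' assume "\<forall>t\<in>set (T1 @ T2). sa (lev e t) (lev e' t)"
    then have "\<forall>t\<in>set T1. sa (lev e t) (lev e' t)" "\<forall>t\<in>set T2. sa (lev e t) (lev e' t)" by auto
    then have "osat lt smul UNIV f1 e \<longleftrightarrow> osat lt smul UNIV f1 e'" "osat lt smul UNIV f2 e \<longleftrightarrow> osat lt smul UNIV f2 e'"
      using T1 T2 by blast+
    then show "osat lt smul UNIV (OAnd f1 f2) e = osat lt smul UNIV (OAnd f1 f2) e'" by simp
  qed
next
  case (OEx m g)
  then obtain Tg where Tg:
    "\<forall>e e'. (\<forall>t\<in>set Tg. sa (lev e t) (lev e' t)) \<longrightarrow> (osat lt smul UNIV g e \<longleftrightarrow> osat lt smul UNIV g e')"
    by blast
  define T' where "T' = filter (\<lambda>t. coef m t \<noteq> 0) Tg"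
  define Tf where "Tf = map (rest m) Tg @ concat (map (\<lambda>t. map (\<lambda>u. pt m t @ scl (-1) (pt m u)) T') T')"
  have one: "\<exists>b'. osat lt smul UNIV g (e'(m:=b'))"
    if ag: "\<forall>t\<in>set Tf. sa (lev e t) (lev e' t)" and b: "osat lt smul UNIV g (e(m:=b))" for e e' b
  proof -
    have PP: "\<forall>i\<in>set T'. \<forall>j\<in>set T'. (lev e (pt m i) = lev e (pt m j) \<longleftrightarrow> lev e' (pt m i) = lev e' (pt m j))
        \<and> (lt (lev e (pt m i)) (lev e (pt m j)) \<longleftrightarrow> lt (lev e' (pt m i)) (lev e' (pt m j)))"
    proof (intro ballI)
      fix i j assume ij: "i \<in> set T'" "j \<in> set T'"
      have "pt m j @ scl (-1) (pt m i) \<in> set Tf" unfolding Tf_def using ij by auto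
      then have "sa (lev e (pt m j) - lev e (pt m i)) (lev e' (pt m j) - lev e' (pt m i))"
        using ag by auto
      then show "(lev e (pt m i) = lev e (pt m j) \<longleftrightarrow> lev e' (pt m i) = lev e' (pt m j))
        \<and> (lt (lev e (pt m i)) (lev e (pt m j)) \<longleftrightarrow> lt (lev e' (pt m i)) (lev e' (pt m j)))"
        unfolding sa_diff by auto
    qed
    obtain b' where b': "\<forall>i\<in>set T'. (b = lev e (pt m i) \<longleftrightarrow> b' = lev e' (pt m i))
        \<and> (lt (lev e (pt m i)) b \<longleftrightarrow> lt (lev e' (pt m i)) b')"
      using realize[OF _ PP, of UNIV s0 b] s0 by auto
    have "\<forall>t\<in>set Tg. sa (lev (e(m:=b)) t) (lev (e'(m:=b')) t)"
    proof (rule shift)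
      show "\<forall>t\<in>set Tg. sa (lev e (rest m t)) (lev e' (rest m t))"
        using ag unfolding Tf_def by auto
      show "\<forall>t\<in>set Tg. coef m t \<noteq> 0 \<longrightarrow> sa (b - lev e (pt m t)) (b' - lev e' (pt m t))"
        using b' unfolding sa_diff T'_def by auto
    qed
    then show ?thesis using Tg b by blast
  qed
  show ?case
  proof (intro exI[of _ Tf] allI impI)
    fix e e' assume ag: "\<forall>t\<in>set Tf. sa (lev e t) (lev e' t)"
    then have ag': "\<forall>t\<in>set Tf. sa (lev e' t) (lev e t)" using sa_sym by blast
    show "osat lt smul UNIV (OEx m g) e = osat lt smul UNIV (OEx m g) e'"
      using one[OF ag] one[OF ag'] by auto
  qed
qed

lemma tv:
  fixes S :: "'a set"
  assumes addS: "\<forall>x\<in>S. \<forall>y\<in>S. x + y \<in> S" and smS: "\<forall>c. \<forall>x\<in>S. smul c x \<in> S"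
    and sS: "s \<in> S" "lt 0 s"
  shows "\<forall>e. (\<forall>n. e n \<in> S) \<longrightarrow> (osat lt smul S f e \<longleftrightarrow> osat lt smul UNIV f e)"
proof (induction f)
  case (OEx m g)
  show ?case
  proof (intro allI impI)
    fix e :: "nat \<Rightarrow> 'a" assume eS: "\<forall>n. e n \<in> S"
    have zS: "0 \<in> S" using smS sS(1) V.scale_zero_left by metis
    obtain Tg where Tg:
      "\<forall>e e'. (\<forall>t\<in>set Tg. sa (lev e t) (lev e' t)) \<longrightarrow> (osat lt smul UNIV g e \<longleftrightarrow> osat lt smul UNIV g e')"
      using uniform by blast
    have "\<exists>a'\<in>S. osat lt smul UNIV g (e(m:=a'))" if a: "osat lt smul UNIV g (e(m:=a))" for a
    proof -
      have PP: "\<forall>i\<in>set Tg. \<forall>j\<in>set Tg. (lev e (pt m i) = lev e (pt m j) \<longleftrightarrow> lev e (pt m i) = lev e (pt m j))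
        \<and> (lt (lev e (pt m i)) (lev e (pt m j)) \<longleftrightarrow> lt (lev e (pt m i)) (lev e (pt m j)))" by blast
      have inS: "\<forall>i\<in>set Tg. lev e (pt m i) \<in> S" using lev_inS[OF eS addS smS zS] by blast
      obtain a' where a': "a' \<in> S" "\<forall>i\<in>set Tg. (a = lev e (pt m i) \<longleftrightarrow> a' = lev e (pt m i))
        \<and> (lt (lev e (pt m i)) a \<longleftrightarrow> lt (lev e (pt m i)) a')"
        using realize[OF _ PP inS addS smS sS] by blast
      have "\<forall>t\<in>set Tg. sa (lev (e(m:=a)) t) (lev (e(m:=a')) t)"
      proof (rule shift)
        show "\<forall>t\<in>set Tg. sa (lev e (rest m t)) (lev e (rest m t))" using sa_refl by blast
        show "\<forall>t\<in>set Tg. coef m t \<noteq> 0 \<longrightarrow> sa (a - lev e (pt m t)) (a' - lev e (pt m t))"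
          using a'(2) unfolding sa_diff by auto
      qed
      then show ?thesis using Tg a a'(1) by blast
    qed
    moreover have "osat lt smul S g (e(m:=a)) \<longleftrightarrow> osat lt smul UNIV g (e(m:=a))" if "a \<in> S" for a
    proof -
      have "\<forall>n. (e(m:=a)) n \<in> S" using eS that by simp
      then show ?thesis using OEx by blast
    qed
    ultimately show "osat lt smul S (OEx m g) e = osat lt smul UNIV (OEx m g) e"
      by auto
  qed
next
  case (ONot f) then show ?case by (metis osat.simps(3))
next
  case (OAnd f1 f2) then show ?case by (metis osat.simps(4))
qed simp_all

end

context ovs begin
lemma olt_trans: "olt lt a b \<Longrightarrow> olt lt b c \<Longrightarrow> olt lt a c"
  by (cases a; cases b; cases c) (auto intro: trans)
lemma olt_irr: "\<not> olt lt a a"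
  by (cases a) (auto simp: irr)
end

lemma ultra:
  assumes hs: "hamel_space lt0 lt1 smul v" and o: "ovs lt0 smul"
    and a: "v a = Some p" and b: "v b = Some q" and pq: "lt0 p q"
  shows "v (a + b) = Some p"
proof -
  interpret ovs lt0 smul by (rule o)
  have U: "\<And>x y. ole lt0 (omin lt0 (v x) (v y)) (v (x + y))" using hs unfolding hamel_space_def by blast
  have vneg: "v (- y) = v y" for y
  proof -
    have "v (smul (-1) y) = v y" using hs unfolding hamel_space_def by (metis neg_equal_0_iff_equal one_neq_zero)
    then show ?thesis by simp
  qed
  have 1: "ole lt0 (Some p) (v (a + b))" using U[of a b] a b pq by (simp add: omin_def ole_def)
  have 2: "ole lt0 (omin lt0 (v (a + b)) (Some q)) (Some p)"
    using U[of "a + b" "- b"] a vneg[of b] b by simp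
  show ?thesis
  proof (rule ccontr)
    assume ne: "v (a + b) \<noteq> Some p"
    then have "olt lt0 (Some p) (v (a + b))" using 1 by (auto simp: ole_def)
    moreover have "olt lt0 (Some p) (Some q)" using pq by simp
    ultimately have "olt lt0 (Some p) (omin lt0 (v (a + b)) (Some q))" by (simp add: omin_def)
    then show False using 2 unfolding ole_def by (metis olt_trans olt_irr)
  qed
qed

lemma sum_val:
  assumes hs: "hamel_space lt0 lt1 smul v" and o: "ovs lt0 smul"
    and "finite F" "F \<noteq> {}" "F \<subseteq> {h. v h = Some h}" "\<forall>g\<in>F. u g \<noteq> 0"
  shows "\<exists>m\<in>F. v (\<Sum>g\<in>F. smul (u g) g) = Some m \<and> (\<forall>g\<in>F. g \<noteq> m \<longrightarrow> lt0 m g)"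
  using assms(3-6)
proof (induction F rule: finite_ne_induct)
  case (singleton x)
  have "v (smul (u x) x) = v x" using hs singleton unfolding hamel_space_def by auto
  then show ?case using singleton by auto
next
  case (insert x F)
  interpret ovs lt0 smul by (rule o)
  obtain m where m: "m \<in> F" "v (\<Sum>g\<in>F. smul (u g) g) = Some m" "\<forall>g\<in>F. g \<noteq> m \<longrightarrow> lt0 m g"
    using insert by auto
  have vx: "v (smul (u x) x) = Some x" using hs insert unfolding hamel_space_def by auto
  have sum: "(\<Sum>g\<in>insert x F. smul (u g) g) = smul (u x) x + (\<Sum>g\<in>F. smul (u g) g)"
    using insert by simp
  have xm: "x \<noteq> m" using insert m by auto
  show ?case
  proof (cases "lt0 x m")
    case True
    have "v (\<Sum>g\<in>insert x F. smul (u g) g) = Some x"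
      unfolding sum by (rule ultra[OF hs o vx m(2) True])
    then show ?thesis using m True trans by auto
  next
    case False
    then have mx: "lt0 m x" using lin xm by blast
    have "v (\<Sum>g\<in>insert x F. smul (u g) g) = Some m"
      unfolding sum add.commute[of "smul (u x) x"] by (rule ultra[OF hs o m(2) vx mx])
    then show ?thesis using m mx by auto
  qed
qed

theorem corollary6p1:
  fixes lt0 lt1 :: "'g::ab_group_add \<Rightarrow> 'g \<Rightarrow> bool"
    and smul :: "'c::linordered_field \<Rightarrow> 'g \<Rightarrow> 'g"
    and v :: "'g \<Rightarrow> 'g option"
  assumes "model_T_Ham lt0 lt1 smul v"
  shows "(\<exists>H. hdefinable lt0 lt1 smul v (Some ` H) \<and> \<not> module.dependent smul H \<and> dense_in lt0 H)
       \<and> (\<exists>S. hdefinable lt0 lt1 smul v (Some ` S) \<and> S \<noteq> UNIV \<and> elementary_substructure lt0 smul S)"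
proof -
  have hs: "hamel_space lt0 lt1 smul v" and ind: "independent_hamel lt0 lt1" and dn: "dense_hamel lt0 v"
    using assms unfolding model_T_Ham_def by auto
  have o: "ovs lt0 smul" using hs unfolding hamel_space_def ovs_def by blast
  interpret ovs lt0 smul by (rule o)
  have vnone: "\<And>x. v x = None \<longleftrightarrow> x = 0" using hs unfolding hamel_space_def by auto
  have v0: "v 0 = None" using vnone by blast
  have vsm: "\<And>c x. c \<noteq> 0 \<Longrightarrow> v (smul c x) = v x" using hs unfolding hamel_space_def by blast
  have videm: "\<And>x g. v x = Some g \<Longrightarrow> v g = Some g" using hs unfolding hamel_space_def by blast
  have U: "\<And>x y. ole lt0 (omin lt0 (v x) (v y)) (v (x + y))" using hs unfolding hamel_space_def by blast
  have "\<exists>z. above_lb lt0 (Some 0) z \<and> below_ub lt0 z None \<and> above_lb lt1 None z \<and> below_ub lt1 z None"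
    using ind[unfolded independent_hamel_def, rule_format, of "Some 0" None None None]
    by (simp add: ext_lt_def)
  then obtain w where w: "lt0 0 w" by (auto simp: above_lb_def)
  define H where "H = {h. v h = Some h}"
  have part1: "hdefinable lt0 lt1 smul v (Some ` H) \<and> \<not> module.dependent smul H \<and> dense_in lt0 H"
  proof (intro conjI)
    show "hdefinable lt0 lt1 smul v (Some ` H)"
      unfolding hdefinable_def
      apply (rule exI[of _ "HAnd (HEq (HVal (HVar 0)) (HVar 0)) (HNot (HEq (HVar 0) HInf))"])
      apply (rule exI[of _ "\<lambda>_. None"])
      apply (auto simp: H_def split: option.splits)
      done
    show "dense_in lt0 H"
      unfolding dense_in_def
    proof (intro allI impI)
      fix a b assume "lt0 a b"
      then obtain c where c: "olt lt0 (Some a) (v c)" "olt lt0 (v c) (Some b)"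
        using dn unfolding dense_hamel_def by blast
      then obtain h where h: "v c = Some h" by (cases "v c") auto
      then show "\<exists>h\<in>H. lt0 a h \<and> lt0 h b" using c videm[OF h] unfolding H_def by auto
    qed
    show "\<not> module.dependent smul H"
    proof
      assume "module.dependent smul H"
      then obtain t u where t: "finite t" "t \<subseteq> H" "(\<Sum>g\<in>t. smul (u g) g) = 0" "\<exists>g\<in>t. u g \<noteq> 0"
        unfolding V.dependent_explicit by blast
      define F where "F = {g\<in>t. u g \<noteq> 0}"
      have Ft: "F \<subseteq> t" unfolding F_def by blast
      have "(\<Sum>g\<in>t. smul (u g) g) = (\<Sum>g\<in>F. smul (u g) g)"
      proof (rule sum.mono_neutral_right[OF t(1) Ft])
        show "\<forall>i\<in>t - F. smul (u i) i = 0" unfolding F_def by simp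
      qed
      moreover have finF: "finite F" using t(1) Ft finite_subset by blast
      moreover have "F \<noteq> {}" using t(4) unfolding F_def by blast
      moreover have "F \<subseteq> {h. v h = Some h}" using t(2) Ft unfolding H_def by blast
      moreover have "\<forall>g\<in>F. u g \<noteq> 0" unfolding F_def by blast
      ultimately obtain m where "v (\<Sum>g\<in>F. smul (u g) g) = Some m" "(\<Sum>g\<in>t. smul (u g) g) = (\<Sum>g\<in>F. smul (u g) g)"
        using sum_val[OF hs o, of F u] by blast
      then have "v 0 = Some m" using t(3) by simp
      moreover have "v 0 = None" using vnone by blast
      ultimately show False by simp
    qed
  qed
  obtain g where g: "v w = Some g" using vnone w irr by (cases "v w") auto
  have vg: "v g = Some g" by (rule videm[OF g])
  have g0: "g \<noteq> 0"
  proof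
    assume "g = 0"
    then have "v g = None" using vnone by simp
    with vg show False by simp
  qed
  have vneg: "v (- y) = v y" for y
    using vsm[of "-1" y] by simp
  define S where "S = {x. \<not> olt lt0 (v x) (Some g)}"
  have part2: "hdefinable lt0 lt1 smul v (Some ` S) \<and> S \<noteq> UNIV \<and> elementary_substructure lt0 smul S"
  proof (intro conjI)
    show "hdefinable lt0 lt1 smul v (Some ` S)"
      unfolding hdefinable_def
      apply (rule exI[of _ "HAnd (HNot (HEq (HVar 0) HInf)) (HNot (HLess0 (HVal (HVar 0)) (HVar 1)))"])
      apply (rule exI[of _ "(\<lambda>_. None)(1 := Some g)"])
      apply (auto simp: S_def split: option.splits)
      done
    show "S \<noteq> UNIV"
    proof -
      have "lt0 (g - w) g" using w lt_diff[of g "g - w"] by simp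
      then obtain c where c: "olt lt0 (v c) (Some g)"
        using dn unfolding dense_hamel_def by blast
      then show ?thesis unfolding S_def by auto
    qed
    have zS: "0 \<in> S" unfolding S_def using v0 by simp
    have addS: "\<forall>x\<in>S. \<forall>y\<in>S. x + y \<in> S"
    proof (intro ballI)
      fix x y assume "x \<in> S" "y \<in> S"
      then have "\<not> olt lt0 (omin lt0 (v x) (v y)) (Some g)" unfolding S_def omin_def by auto
      moreover have "olt lt0 (omin lt0 (v x) (v y)) (v (x + y)) \<or> omin lt0 (v x) (v y) = v (x + y)"
        using U[of x y] unfolding ole_def .
      ultimately have "\<not> olt lt0 (v (x + y)) (Some g)" by (metis olt_trans)
      then show "x + y \<in> S" unfolding S_def by simp
    qed
    have smS: "\<forall>c. \<forall>x\<in>S. smul c x \<in> S"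
    proof (intro allI ballI)
      fix c x assume "x \<in> S"
      then show "smul c x \<in> S" using zS vsm[of c x] unfolding S_def by (cases "c = 0") auto
    qed
    obtain s where s: "s \<in> S" "lt0 0 s"
    proof (cases "lt0 0 g")
      case True
      have "g \<in> S" unfolding S_def using vg irr by simp
      then show ?thesis using that True by blast
    next
      case False
      then have "lt0 0 (- g)" using lin g0 lt_neg by blast
      moreover have "- g \<in> S" unfolding S_def using vg vneg[of g] irr by simp
      ultimately show ?thesis using that by blast
    qed
    interpret ovs_nt lt0 smul w by unfold_locales (rule w)
    show "elementary_substructure lt0 smul S"
      unfolding elementary_substructure_def
      using zS addS smS tv[OF addS smS s] by blast
  qed
  show ?thesis using part1 part2 by blast
qed

end
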